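(* Let $Y\subset\mathbb{R}^n$ be open, and let $\omega\colon Y\to\mathbb{R}^n$, $f\colon Y\to\mathbb{R}^n$, $F\colon Y\to\mathbb{R}$, $H\colon Y\to\mathbb{R}^{n\times m}$, $g\colon Y\to\mathbb{R}^m$, $f^{\mathrm{num}}\colon Y\times Y\to\mathbb{R}^n$ be arbitrary with $f^{\mathrm{num}}(u,u)=f(u)$. Then the following are equivalent: (A) there exists $F^{\mathrm{num}}\colon Y\times Y\to\mathbb{R}$ with $F^{\mathrm{num}}(u,u)=F(u)$ such that for all $u_-,u_0,u_+\in Y$, $$\omega(u_0)\cdot\Big(f^{\mathrm{num}}(u_0,u_+)-f^{\mathrm{num}}(u_-,u_0)+\tfrac12 H(u_0)\big(g(u_+)-g(u_0)\big)+\tfrac12 H(u_0)\big(g(u_0)-g(u_-)\big)\Big)\ \ge\ F^{\mathrm{num}}(u_0,u_+)-F^{\mathrm{num}}(u_-,u_0);$$ (B) for all $u_-,u_+\in Y$, $$[\![\omega]\!]\cdot f^{\mathrm{num}}(u_-,u_+)-\{\{\omega\cdot H\}\}\,[\![g]\!]\ \le\ [\![\omega\cdot f-F]\!],$$ where $\omega\cdot H$ denotes the row vector $\omega^TH\in\mathbb{R}^{1\times m}$. Moreover, there exists a consistent $F^{\mathrm{num}}$ with equality in (A) for all triples iff (B) holds with equality for all pairs, and then $$F^{\mathrm{num}}=\{\{F\}\}+\{\{\omega\}\}\cdot f^{\mathrm{num}}-\{\{\omega\cdot f\}\}-\tfrac14[\![\omega\cdot H]\!]\,[\![g]\!].$$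
   Context: For a function $a$ on $Y$ and states $u_\pm$: $\{\{a\}\}=\tfrac12(a(u_-)+a(u_+))$, $[\![a]\!]=a(u_+)-a(u_-)$; numerical fluxes are evaluated at $(u_-,u_+)$. *)

theory Defs
  imports "HOL-Analysis.Analysis"
begin

end

theory Submission
  imports Defs
begin

lemma vm_inner: "((x::real^'n) v* (A::real^'m^'n)) \<bullet> y = x \<bullet> (A *v y)"
  unfolding vector_matrix_mult_def matrix_vector_mult_def inner_vec_def
  by (simp add: sum_distrib_left sum_distrib_right mult.assoc mult.left_commute sum.swap[of _ "UNIV::'m set"])

theorem mainTheorem4:
  fixes Y :: "(real^'n) set"
    and \<omega> f :: "real^'n \<Rightarrow> real^'n"
    and F :: "real^'n \<Rightarrow> real"
    and H :: "real^'n \<Rightarrow> real^'m^'n"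
    and g :: "real^'n \<Rightarrow> real^'m"
    and fnum :: "real^'n \<Rightarrow> real^'n \<Rightarrow> real^'n"
  assumes "open Y"
    and "\<And>u. u \<in> Y \<Longrightarrow> fnum u u = f u"
  shows
   "((\<exists>Fnum :: real^'n \<Rightarrow> real^'n \<Rightarrow> real.
        (\<forall>u\<in>Y. Fnum u u = F u) \<and>
        (\<forall>um\<in>Y. \<forall>u0\<in>Y. \<forall>up\<in>Y.
           \<omega> u0 \<bullet> (fnum u0 up - fnum um u0
              + (1/2) *\<^sub>R (H u0 *v (g up - g u0))
              + (1/2) *\<^sub>R (H u0 *v (g u0 - g um)))
           \<ge> Fnum u0 up - Fnum um u0))
     \<longleftrightarrow>
     (\<forall>um\<in>Y. \<forall>up\<in>Y.
        (\<omega> up - \<omega> um) \<bullet> fnum um up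
        - ((1/2) *\<^sub>R (\<omega> um v* H um + \<omega> up v* H up)) \<bullet> (g up - g um)
        \<le> (\<omega> up \<bullet> f up - F up) - (\<omega> um \<bullet> f um - F um)))
  \<and>
   ((\<exists>Fnum :: real^'n \<Rightarrow> real^'n \<Rightarrow> real.
        (\<forall>u\<in>Y. Fnum u u = F u) \<and>
        (\<forall>um\<in>Y. \<forall>u0\<in>Y. \<forall>up\<in>Y.
           \<omega> u0 \<bullet> (fnum u0 up - fnum um u0
              + (1/2) *\<^sub>R (H u0 *v (g up - g u0))
              + (1/2) *\<^sub>R (H u0 *v (g u0 - g um)))
           = Fnum u0 up - Fnum um u0))
     \<longleftrightarrow>
     (\<forall>um\<in>Y. \<forall>up\<in>Y.
        (\<omega> up - \<omega> um) \<bullet> fnum um up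
        - ((1/2) *\<^sub>R (\<omega> um v* H um + \<omega> up v* H up)) \<bullet> (g up - g um)
        = (\<omega> up \<bullet> f up - F up) - (\<omega> um \<bullet> f um - F um)))
  \<and>
   (\<forall>Fnum :: real^'n \<Rightarrow> real^'n \<Rightarrow> real.
        (\<forall>u\<in>Y. Fnum u u = F u) \<and>
        (\<forall>um\<in>Y. \<forall>u0\<in>Y. \<forall>up\<in>Y.
           \<omega> u0 \<bullet> (fnum u0 up - fnum um u0
              + (1/2) *\<^sub>R (H u0 *v (g up - g u0))
              + (1/2) *\<^sub>R (H u0 *v (g u0 - g um)))
           = Fnum u0 up - Fnum um u0)
      \<longrightarrow>
      (\<forall>um\<in>Y. \<forall>up\<in>Y.
         Fnum um up =
           (F um + F up) / 2
           + ((1/2) *\<^sub>R (\<omega> um + \<omega> up)) \<bullet> fnum um up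
           - (\<omega> um \<bullet> f um + \<omega> up \<bullet> f up) / 2
           - (1/4) * ((\<omega> up v* H up - \<omega> um v* H um) \<bullet> (g up - g um))))"
proof -
  note S = inner_add_left inner_add_right inner_diff_left inner_diff_right
    inner_scaleR_left inner_scaleR_right matrix_vector_mult_diff_distrib vm_inner
  have ff: "\<And>u. u \<in> Y \<Longrightarrow> fnum u u = f u" by (fact assms(2))
  define G where "G = (\<lambda>a b. \<omega> a \<bullet> fnum a b + (1/2) * (\<omega> a \<bullet> (H a *v (g b - g a))) - (\<omega> a \<bullet> f a - F a))"
  have Gd: "\<forall>u\<in>Y. G u u = F u" using ff by (simp add: G_def)
  show ?thesis
  proof (intro conjI allI impI)
    show "(\<exists>Fnum. (\<forall>u\<in>Y. Fnum u u = F u) \<and>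
        (\<forall>um\<in>Y. \<forall>u0\<in>Y. \<forall>up\<in>Y.
           \<omega> u0 \<bullet> (fnum u0 up - fnum um u0
              + (1/2) *\<^sub>R (H u0 *v (g up - g u0))
              + (1/2) *\<^sub>R (H u0 *v (g u0 - g um)))
           \<ge> Fnum u0 up - Fnum um u0))
     \<longleftrightarrow>
     (\<forall>um\<in>Y. \<forall>up\<in>Y.
        (\<omega> up - \<omega> um) \<bullet> fnum um up
        - ((1/2) *\<^sub>R (\<omega> um v* H um + \<omega> up v* H up)) \<bullet> (g up - g um)
        \<le> (\<omega> up \<bullet> f up - F up) - (\<omega> um \<bullet> f um - F um))" (is "?L \<longleftrightarrow> ?R")
    proof
      assume ?L
      then obtain Fn where h1: "\<forall>u\<in>Y. Fn u u = F u" and h2: "\<forall>um\<in>Y. \<forall>u0\<in>Y. \<forall>up\<in>Y.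
           \<omega> u0 \<bullet> (fnum u0 up - fnum um u0
              + (1/2) *\<^sub>R (H u0 *v (g up - g u0))
              + (1/2) *\<^sub>R (H u0 *v (g u0 - g um)))
           \<ge> Fn u0 up - Fn um u0" by blast
      show ?R
      proof (intro ballI)
        fix a b assume a: "a \<in> Y" and b: "b \<in> Y"
        have 1: "\<omega> a \<bullet> (fnum a b - fnum a a + (1/2) *\<^sub>R (H a *v (g b - g a)) + (1/2) *\<^sub>R (H a *v (g a - g a))) \<ge> Fn a b - Fn a a"
          using h2 a b by blast
        have 2: "\<omega> b \<bullet> (fnum b b - fnum a b + (1/2) *\<^sub>R (H b *v (g b - g b)) + (1/2) *\<^sub>R (H b *v (g b - g a))) \<ge> Fn b b - Fn a b"
          using h2 a b by blast
        show "(\<omega> b - \<omega> a) \<bullet> fnum a b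
        - ((1/2) *\<^sub>R (\<omega> a v* H a + \<omega> b v* H b)) \<bullet> (g b - g a)
        \<le> (\<omega> b \<bullet> f b - F b) - (\<omega> a \<bullet> f a - F a)"
          using 1 2 h1 ff a b by (simp add: S; argo)
      qed
    next
      assume R: ?R
      show ?L
      proof (intro exI[of _ G] conjI Gd ballI)
        fix a c b assume a: "a \<in> Y" and c: "c \<in> Y" and b: "b \<in> Y"
        have "(\<omega> c - \<omega> a) \<bullet> fnum a c
        - ((1/2) *\<^sub>R (\<omega> a v* H a + \<omega> c v* H c)) \<bullet> (g c - g a)
        \<le> (\<omega> c \<bullet> f c - F c) - (\<omega> a \<bullet> f a - F a)" using R a c by blast
        then show "\<omega> c \<bullet> (fnum c b - fnum a c + (1/2) *\<^sub>R (H c *v (g b - g c)) + (1/2) *\<^sub>R (H c *v (g c - g a))) \<ge> G c b - G a c"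
          by (simp add: S G_def; argo)
      qed
    qed
  next
    show "(\<exists>Fnum. (\<forall>u\<in>Y. Fnum u u = F u) \<and>
        (\<forall>um\<in>Y. \<forall>u0\<in>Y. \<forall>up\<in>Y.
           \<omega> u0 \<bullet> (fnum u0 up - fnum um u0
              + (1/2) *\<^sub>R (H u0 *v (g up - g u0))
              + (1/2) *\<^sub>R (H u0 *v (g u0 - g um)))
           = Fnum u0 up - Fnum um u0))
     \<longleftrightarrow>
     (\<forall>um\<in>Y. \<forall>up\<in>Y.
        (\<omega> up - \<omega> um) \<bullet> fnum um up
        - ((1/2) *\<^sub>R (\<omega> um v* H um + \<omega> up v* H up)) \<bullet> (g up - g um)
        = (\<omega> up \<bullet> f up - F up) - (\<omega> um \<bullet> f um - F um))" (is "?L \<longleftrightarrow> ?R")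
    proof
      assume ?L
      then obtain Fn where h1: "\<forall>u\<in>Y. Fn u u = F u" and h2: "\<forall>um\<in>Y. \<forall>u0\<in>Y. \<forall>up\<in>Y.
           \<omega> u0 \<bullet> (fnum u0 up - fnum um u0
              + (1/2) *\<^sub>R (H u0 *v (g up - g u0))
              + (1/2) *\<^sub>R (H u0 *v (g u0 - g um)))
           = Fn u0 up - Fn um u0" by blast
      show ?R
      proof (intro ballI)
        fix a b assume a: "a \<in> Y" and b: "b \<in> Y"
        have 1: "\<omega> a \<bullet> (fnum a b - fnum a a + (1/2) *\<^sub>R (H a *v (g b - g a)) + (1/2) *\<^sub>R (H a *v (g a - g a))) = Fn a b - Fn a a"
          using h2 a b by blast
        have 2: "\<omega> b \<bullet> (fnum b b - fnum a b + (1/2) *\<^sub>R (H b *v (g b - g b)) + (1/2) *\<^sub>R (H b *v (g b - g a))) = Fn b b - Fn a b"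
          using h2 a b by blast
        show "(\<omega> b - \<omega> a) \<bullet> fnum a b
        - ((1/2) *\<^sub>R (\<omega> a v* H a + \<omega> b v* H b)) \<bullet> (g b - g a)
        = (\<omega> b \<bullet> f b - F b) - (\<omega> a \<bullet> f a - F a)"
          using 1 2 h1 ff a b by (simp add: S; argo)
      qed
    next
      assume R: ?R
      show ?L
      proof (intro exI[of _ G] conjI Gd ballI)
        fix a c b assume a: "a \<in> Y" and c: "c \<in> Y" and b: "b \<in> Y"
        have "(\<omega> c - \<omega> a) \<bullet> fnum a c
        - ((1/2) *\<^sub>R (\<omega> a v* H a + \<omega> c v* H c)) \<bullet> (g c - g a)
        = (\<omega> c \<bullet> f c - F c) - (\<omega> a \<bullet> f a - F a)" using R a c by blast
        then show "\<omega> c \<bullet> (fnum c b - fnum a c + (1/2) *\<^sub>R (H c *v (g b - g c)) + (1/2) *\<^sub>R (H c *v (g c - g a))) = G c b - G a c"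
          by (simp add: S G_def; argo)
      qed
    qed
  next
    fix Fn :: "real^'n \<Rightarrow> real^'n \<Rightarrow> real"
    assume "(\<forall>u\<in>Y. Fn u u = F u) \<and>
        (\<forall>um\<in>Y. \<forall>u0\<in>Y. \<forall>up\<in>Y.
           \<omega> u0 \<bullet> (fnum u0 up - fnum um u0
              + (1/2) *\<^sub>R (H u0 *v (g up - g u0))
              + (1/2) *\<^sub>R (H u0 *v (g u0 - g um)))
           = Fn u0 up - Fn um u0)"
    then have h1: "\<forall>u\<in>Y. Fn u u = F u" and h2: "\<forall>um\<in>Y. \<forall>u0\<in>Y. \<forall>up\<in>Y.
           \<omega> u0 \<bullet> (fnum u0 up - fnum um u0
              + (1/2) *\<^sub>R (H u0 *v (g up - g u0))
              + (1/2) *\<^sub>R (H u0 *v (g u0 - g um)))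
           = Fn u0 up - Fn um u0" by blast+
    show "\<forall>um\<in>Y. \<forall>up\<in>Y.
         Fn um up =
           (F um + F up) / 2
           + ((1/2) *\<^sub>R (\<omega> um + \<omega> up)) \<bullet> fnum um up
           - (\<omega> um \<bullet> f um + \<omega> up \<bullet> f up) / 2
           - (1/4) * ((\<omega> up v* H up - \<omega> um v* H um) \<bullet> (g up - g um))"
    proof (intro ballI)
      fix a b assume a: "a \<in> Y" and b: "b \<in> Y"
      have 1: "\<omega> a \<bullet> (fnum a b - fnum a a + (1/2) *\<^sub>R (H a *v (g b - g a)) + (1/2) *\<^sub>R (H a *v (g a - g a))) = Fn a b - Fn a a"
        using h2 a b by blast
      have 2: "\<omega> b \<bullet> (fnum b b - fnum a b + (1/2) *\<^sub>R (H b *v (g b - g b)) + (1/2) *\<^sub>R (H b *v (g b - g a))) = Fn b b - Fn a b"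
        using h2 a b by blast
      show "Fn a b =
           (F a + F b) / 2
           + ((1/2) *\<^sub>R (\<omega> a + \<omega> b)) \<bullet> fnum a b
           - (\<omega> a \<bullet> f a + \<omega> b \<bullet> f b) / 2
           - (1/4) * ((\<omega> b v* H b - \<omega> a v* H a) \<bullet> (g b - g a))"
        using 1 2 h1 ff a b by (simp add: S; argo)
    qed
  qed
qed

end
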